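(* In the multi-hop VAoI network described in the context, where node $0$ uses the randomized stationary, uniform, or threshold update policy, the average VAoI at the destination node $N+1$ is \[ \bar\Delta_{N+1}=\bar\Delta_1+p_g\sum_{i=1}^N\frac1{\rho_i}, \] where $\bar\Delta_j$ denotes the long-run average VAoI at node $j$.
   Context: Time is slotted. A source generates a new version in each slot independently with probability $p_g\in(0,1)$, and its version index $V_S(t)$ increases by one at the start of the slot following each generation. Nodes $0,1,\dots,N+1$ form a line; node $0$ always holds the current source version, node $N+1$ is the destination, and nodes $1,\dots,N$ are relays. Each node stores only the latest version it has received. Link $i$ (from node $i$ to node $i+1$) delivers a transmission successfully with probability $\rho_i$, independently across slots and links, with $\rho_0=p_s\in(0,1)$. Each relay node $i\ge1$ transmits its stored version in every slot, so that $V_{i+1}(t+1)=V_i(t)$ if the transmission on link $i$ at slot $t$ succeeds and $V_{i+1}(t+1)=V_{i+1}(t)$ otherwise. The VAoI at node $j$ is $\Delta_j(t)=V_S(t)-V_j(t)$. Node $0$ decides in each slot whether to transmit ($a(t)=1$) or not to node $1$ via one of: the randomized stationary policy (i.i.d. $a(t)\sim$ Bernoulli$(\alpha)$, $0<\alpha\le1$); the uniform policy ($a(t)=1$ iff $t\in\{0,D,2D,\dots\}$ for an integer $D\ge1$); or the threshold policy ($a(t)=1$ iff $\Delta_1(t)\ge\Delta_T$). The long-run average VAoI at node $j$ is $\bar\Delta_j=\lim_{t\to\infty}\mathbb{E}[\Delta_j(t)]$ (equivalently the long-run time average of $\mathbb{E}[\Delta_j(t)]$). *)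

theory Defs
  imports "HOL-Probability.Probability"
begin

text \<open>Index set of the elementary Bernoulli random variables:
  Gen t     : the source generates a new version in slot t (prob p_g);
  Link i t  : a transmission on link i (node i to node i+1) in slot t succeeds (prob rho_i);
  Coin t    : the Bernoulli(alpha) decision of the randomized stationary policy in slot t.\<close>
datatype idx = Gen nat | Link nat nat | Coin nat

datatype policy = RandStat real | Uniform nat | Threshold nat

text \<open>Decision a(t) of node 0, given the outcome x of the elementary variables,
  the slot t and the current VAoI d1 = Delta_1(t) at node 1.\<close>
fun policy_action :: "policy \<Rightarrow> (idx \<Rightarrow> bool) \<Rightarrow> nat \<Rightarrow> nat \<Rightarrow> bool" where
  "policy_action (RandStat \<alpha>) x t d1 = x (Coin t)"
| "policy_action (Uniform D) x t d1 = (t mod D = 0)"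
| "policy_action (Threshold T) x t d1 = (d1 \<ge> T)"

text \<open>State at slot t: (V_S(t), V) where V j is the version stored at node j
  (V 0 = V_S(t) since node 0 always holds the current source version).
  All versions start at 0.\<close>
primrec vstate :: "policy \<Rightarrow> (idx \<Rightarrow> bool) \<Rightarrow> nat \<Rightarrow> nat \<times> (nat \<Rightarrow> nat)" where
  "vstate pol x 0 = (0, (\<lambda>j. 0))"
| "vstate pol x (Suc t) =
     (let s = fst (vstate pol x t); V = snd (vstate pol x t);
          a = policy_action pol x t (s - V 1);
          s' = s + (if x (Gen t) then 1 else 0)
      in (s', (\<lambda>j. if j = 0 then s'
                   else if (j = 1 \<longrightarrow> a) \<and> x (Link (j - 1) t) then V (j - 1)
                   else V j)))"

definition vaoi :: "policy \<Rightarrow> (idx \<Rightarrow> 'w \<Rightarrow> bool) \<Rightarrow> nat \<Rightarrow> nat \<Rightarrow> 'w \<Rightarrow> real" where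
  "vaoi pol X j t \<omega> =
     real (fst (vstate pol (\<lambda>i. X i \<omega>) t)) - real (snd (vstate pol (\<lambda>i. X i \<omega>) t) j)"

definition avg_vaoi :: "'w measure \<Rightarrow> policy \<Rightarrow> (idx \<Rightarrow> 'w \<Rightarrow> bool) \<Rightarrow> nat \<Rightarrow> nat \<Rightarrow> real" where
  "avg_vaoi M pol X j T = (\<Sum>t<T. integral\<^sup>L M (vaoi pol X j t)) / real T"

end

theory Submission
  imports Defs
begin

locale vsys = prob_space M for M :: "'w measure" +
  fixes X :: "idx \<Rightarrow> 'w \<Rightarrow> bool"
  assumes ind: "indep_vars (\<lambda>_. count_space UNIV) X UNIV"
begin

definition cyl :: "idx set \<Rightarrow> (idx \<Rightarrow> bool) \<Rightarrow> 'w set" where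
  "cyl S v = {\<omega>\<in>space M. \<forall>i\<in>S. X i \<omega> = v i}"

lemma ev_sets: "{\<omega>\<in>space M. X i \<omega> = b} \<in> sets M"
proof -
  have "random_variable (count_space UNIV) (X i)" using ind unfolding indep_vars_def2 by auto
  then have "X i -` {b} \<inter> space M \<in> sets M" by (rule measurable_sets) auto
  moreover have "X i -` {b} \<inter> space M = {\<omega>\<in>space M. X i \<omega> = b}" by auto
  ultimately show ?thesis by simp
qed

lemma ev_sets': "{\<omega>\<in>space M. X i \<omega>} \<in> sets M"
  using ev_sets[of i True] by simp

lemma cyl_sets: "finite S \<Longrightarrow> cyl S v \<in> sets M"
proof -
  assume "finite S"
  have "cyl S v = space M \<inter> (\<Inter>i\<in>S. {\<omega>\<in>space M. X i \<omega> = v i})" unfolding cyl_def by auto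
  also have "\<dots> \<in> sets M" using \<open>finite S\<close> ev_sets by auto
  finally show ?thesis .
qed

lemma int_ind: "A \<in> sets M \<Longrightarrow> integrable M (\<lambda>\<omega>. (c::real) * indicator A \<omega>)"
  by (intro integrable_mult_right integrable_real_indicator) (auto simp: less_top[symmetric])

lemma int_ind_eq: "A \<in> sets M \<Longrightarrow> integral\<^sup>L M (\<lambda>\<omega>. (c::real) * indicator A \<omega>) = c * prob A"
  by simp

lemma int_sum_ind: assumes "finite I" "\<And>v. v \<in> I \<Longrightarrow> A v \<in> sets M"
  shows "integral\<^sup>L M (\<lambda>\<omega>. \<Sum>v\<in>I. (c v::real) * indicator (A v) \<omega>) = (\<Sum>v\<in>I. c v * prob (A v))"
proof -
  have "integral\<^sup>L M (\<lambda>\<omega>. \<Sum>v\<in>I. (c v::real) * indicator (A v) \<omega>) = (\<Sum>v\<in>I. integral\<^sup>L M (\<lambda>\<omega>. c v * indicator (A v) \<omega>))"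
    using assms by (intro Bochner_Integration.integral_sum int_ind) auto
  also have "\<dots> = (\<Sum>v\<in>I. c v * prob (A v))"
    using assms by (intro sum.cong refl int_ind_eq) auto
  finally show ?thesis .
qed

lemma prob_cyl: assumes "finite S"
  shows "prob (cyl S v) = (\<Prod>i\<in>S. prob {\<omega>\<in>space M. X i \<omega> = v i})"
proof (cases "S = {}")
  case True
  then show ?thesis by (simp add: cyl_def prob_space)
next
  case False
  have I: "indep_sets (\<lambda>i. { X i -` A \<inter> space M | A. A \<in> sets ((\<lambda>_. count_space UNIV) i)}) UNIV"
    using ind unfolding indep_vars_def2 by auto
  have "cyl S v = (\<Inter>i\<in>S. X i -` {v i} \<inter> space M)" unfolding cyl_def using False by auto
  then have "prob (cyl S v) = (\<Prod>i\<in>S. prob (X i -` {v i} \<inter> space M))"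
    using indep_setsD[OF I, of S "\<lambda>i. X i -` {v i} \<inter> space M"] False assms by auto
  also have "\<dots> = (\<Prod>i\<in>S. prob {\<omega>\<in>space M. X i \<omega> = v i})"
    by (intro prod.cong refl arg_cong[where f=prob]) auto
  finally show ?thesis .
qed

definition dep :: "idx set \<Rightarrow> ('w \<Rightarrow> real) \<Rightarrow> bool" where
  "dep S W \<longleftrightarrow> (\<exists>F::(idx \<Rightarrow> bool) \<Rightarrow> real. \<forall>\<omega>\<in>space M. W \<omega> = F (restrict (\<lambda>i. X i \<omega>) S))"

lemma restrict_eq_iff: "v \<in> PiE S B \<Longrightarrow> (v = restrict f S) \<longleftrightarrow> (\<forall>i\<in>S. v i = f i)"
  by (auto simp: fun_eq_iff PiE_def extensional_def)

lemma sum_repr: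
  fixes F :: "(idx \<Rightarrow> bool) \<Rightarrow> real"
  assumes "finite S" "\<omega> \<in> space M"
  shows "F (restrict (\<lambda>i. X i \<omega>) S) =
     (\<Sum>v\<in>PiE S (\<lambda>_. UNIV). F v * indicator (cyl S v) \<omega>)"
proof -
  let ?r = "restrict (\<lambda>i. X i \<omega>) S"
  have "(\<Sum>v\<in>PiE S (\<lambda>_. UNIV). F v * indicator (cyl S v) \<omega>) =
        (\<Sum>v\<in>PiE S (\<lambda>_. UNIV). if v = ?r then F v else 0)"
  proof (rule sum.cong[OF refl])
    fix v :: "idx \<Rightarrow> bool" assume v: "v \<in> PiE S (\<lambda>_. UNIV)"
    have "\<omega> \<in> cyl S v \<longleftrightarrow> v = ?r" using restrict_eq_iff[OF v] assms(2)
      unfolding cyl_def by auto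
    then show "F v * indicator (cyl S v) \<omega> = (if v = ?r then F v else 0)" by auto
  qed
  also have "\<dots> = F ?r" using assms(1) by (subst sum.delta[of _ "restrict (\<lambda>i. X i \<omega>) S"]) (auto simp: finite_PiE)
  finally show ?thesis by simp
qed

lemma dep_integrable: assumes "finite S" "dep S W" shows "integrable M W"
proof -
  obtain F :: "(idx \<Rightarrow> bool) \<Rightarrow> real" where F: "\<forall>\<omega>\<in>space M. W \<omega> = F (restrict (\<lambda>i. X i \<omega>) S)" using assms(2) dep_def by auto
  have "integrable M (\<lambda>\<omega>. \<Sum>v\<in>PiE S (\<lambda>_. UNIV). F v * indicator (cyl S v) \<omega>)"
    using assms(1) cyl_sets by (intro Bochner_Integration.integrable_sum int_ind) auto
  moreover have "integrable M (\<lambda>\<omega>. \<Sum>v\<in>PiE S (\<lambda>_. UNIV). F v * indicator (cyl S v) \<omega>) = integrable M W"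
    by (rule Bochner_Integration.integrable_cong[OF refl]) (use F sum_repr assms(1) in auto)
  ultimately show ?thesis by simp
qed

lemma dep_integral: fixes F :: "(idx \<Rightarrow> bool) \<Rightarrow> real" assumes "finite S" "\<forall>\<omega>\<in>space M. W \<omega> = F (restrict (\<lambda>i. X i \<omega>) S)"
  shows "integral\<^sup>L M W = (\<Sum>v\<in>PiE S (\<lambda>_. UNIV). F v * prob (cyl S v))"
proof -
  have "integral\<^sup>L M W = integral\<^sup>L M (\<lambda>\<omega>. \<Sum>v\<in>PiE S (\<lambda>_. UNIV). F v * indicator (cyl S v) \<omega>)"
    by (rule Bochner_Integration.integral_cong[OF refl]) (use assms sum_repr in auto)
  also have "\<dots> = (\<Sum>v\<in>PiE S (\<lambda>_. UNIV). F v * prob (cyl S v))"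
    using assms(1) cyl_sets by (intro int_sum_ind) (auto simp: finite_PiE)
  finally show ?thesis .
qed

lemma dep_indep:
  assumes S: "finite S" and j: "j \<notin> S" and d: "dep S W"
  shows "integral\<^sup>L M (\<lambda>\<omega>. W \<omega> * (if X j \<omega> then 1 else 0)) =
         integral\<^sup>L M W * prob {\<omega>\<in>space M. X j \<omega>}"
proof -
  obtain F :: "(idx \<Rightarrow> bool) \<Rightarrow> real" where F: "\<forall>\<omega>\<in>space M. W \<omega> = F (restrict (\<lambda>i. X i \<omega>) S)" using d dep_def by auto
  let ?E = "{\<omega>\<in>space M. X j \<omega>}"
  have "integral\<^sup>L M (\<lambda>\<omega>. W \<omega> * (if X j \<omega> then 1 else 0)) =
      integral\<^sup>L M (\<lambda>\<omega>. \<Sum>v\<in>PiE S (\<lambda>_. UNIV). F v * indicator (cyl S v \<inter> ?E) \<omega>)"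
  proof (rule Bochner_Integration.integral_cong[OF refl])
    fix \<omega> assume w: "\<omega> \<in> space M"
    have "W \<omega> * (if X j \<omega> then 1 else 0) = (\<Sum>v\<in>PiE S (\<lambda>_. UNIV). F v * indicator (cyl S v) \<omega>) * (if X j \<omega> then 1 else 0)"
      using F w sum_repr[OF S w, of F] by simp
    also have "\<dots> = (\<Sum>v\<in>PiE S (\<lambda>_. UNIV). F v * indicator (cyl S v \<inter> ?E) \<omega>)"
      unfolding sum_distrib_right using w by (intro sum.cong refl) (auto simp: indicator_def)
    finally show "W \<omega> * (if X j \<omega> then 1 else 0) = (\<Sum>v\<in>PiE S (\<lambda>_. UNIV). F v * indicator (cyl S v \<inter> ?E) \<omega>)" .
  qed
  also have "\<dots> = (\<Sum>v\<in>PiE S (\<lambda>_. UNIV). F v * prob (cyl S v \<inter> ?E))"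
    using S cyl_sets ev_sets' by (intro int_sum_ind sets.Int) (auto simp: finite_PiE)
  also have "\<dots> = (\<Sum>v\<in>PiE S (\<lambda>_. UNIV). F v * prob (cyl S v) * prob ?E)"
  proof (rule sum.cong[OF refl])
    fix v
    have "cyl S v \<inter> ?E = cyl (insert j S) (v(j:=True))" unfolding cyl_def using j by auto
    then have "prob (cyl S v \<inter> ?E) = (\<Prod>i\<in>insert j S. prob {\<omega>\<in>space M. X i \<omega> = (v(j:=True)) i})"
      using prob_cyl S by simp
    also have "\<dots> = prob ?E * (\<Prod>i\<in>S. prob {\<omega>\<in>space M. X i \<omega> = (v(j:=True)) i})"
      using S j by simp
    also have "(\<Prod>i\<in>S. prob {\<omega>\<in>space M. X i \<omega> = (v(j:=True)) i}) = prob (cyl S v)"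
      using prob_cyl[OF S] j by (auto intro!: prod.cong)
    finally show "F v * prob (cyl S v \<inter> ?E) = F v * prob (cyl S v) * prob ?E" by simp
  qed
  also have "\<dots> = integral\<^sup>L M W * prob ?E"
    using dep_integral[OF S F] by (simp add: sum_distrib_right)
  finally show ?thesis .
qed

lemma dep_mono: "dep S W \<Longrightarrow> S \<subseteq> S' \<Longrightarrow> dep S' W"
  unfolding dep_def
proof clarify
  fix F assume F: "\<forall>\<omega>\<in>space M. W \<omega> = F (restrict (\<lambda>i. X i \<omega>) S)" and "S \<subseteq> S'"
  then show "\<exists>G. \<forall>\<omega>\<in>space M. W \<omega> = G (restrict (\<lambda>i. X i \<omega>) S')"
    by (intro exI[of _ "\<lambda>v. F (restrict v S)"]) (auto simp: restrict_restrict Int_absorb1)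
qed

lemma dep_X: "i \<in> S \<Longrightarrow> dep S (\<lambda>\<omega>. f (X i \<omega>))"
  unfolding dep_def by (intro exI[of _ "\<lambda>v. f (v i)"]) auto

lemma dep_const: "dep S (\<lambda>\<omega>. c)"
  unfolding dep_def by auto

lemma dep_comp: "dep S W \<Longrightarrow> dep S (\<lambda>\<omega>. f (W \<omega>))"
  unfolding dep_def
proof clarify
  fix F assume "\<forall>\<omega>\<in>space M. W \<omega> = F (restrict (\<lambda>i. X i \<omega>) S)"
  then show "\<exists>G. \<forall>\<omega>\<in>space M. f (W \<omega>) = G (restrict (\<lambda>i. X i \<omega>) S)"
    by (intro exI[of _ "\<lambda>v. f (F v)"]) auto
qed

lemma dep_comp2: "dep S W1 \<Longrightarrow> dep S W2 \<Longrightarrow> dep S (\<lambda>\<omega>. f (W1 \<omega>) (W2 \<omega>))"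
  unfolding dep_def
proof clarify
  fix F1 F2 assume "\<forall>\<omega>\<in>space M. W1 \<omega> = F1 (restrict (\<lambda>i. X i \<omega>) S)" "\<forall>\<omega>\<in>space M. W2 \<omega> = F2 (restrict (\<lambda>i. X i \<omega>) S)"
  then show "\<exists>G. \<forall>\<omega>\<in>space M. f (W1 \<omega>) (W2 \<omega>) = G (restrict (\<lambda>i. X i \<omega>) S)"
    by (intro exI[of _ "\<lambda>v. f (F1 v) (F2 v)"]) auto
qed

end

definition past :: "nat \<Rightarrow> nat \<Rightarrow> idx set" where
  "past t n = Gen ` {..<t} \<union> Coin ` {..<t} \<union> (\<lambda>(i,u). Link i u) ` ({..n} \<times> {..<t})"

lemma finite_past: "finite (past t n)"
  unfolding past_def by auto

lemma past_notin: "Gen t \<notin> past t n" "Coin t \<notin> past t n" "Link i t \<notin> past t n"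
  unfolding past_def by auto

lemma past_mono: "past t n \<subseteq> past (Suc t) n"
  unfolding past_def by auto

lemma past_in: "Gen t \<in> past (Suc t) n" "Coin t \<in> past (Suc t) n" "i \<le> n \<Longrightarrow> Link i t \<in> past (Suc t) n"
  unfolding past_def by auto

lemma vs_le: "snd (vstate pol x t) j \<le> fst (vstate pol x t)"
proof (induction t arbitrary: j)
  case 0 then show ?case by simp
next
  case (Suc t)
  have "snd (vstate pol x t) (j-1) \<le> fst (vstate pol x t)" using Suc by blast
  then show ?case using Suc[of j] by (auto simp: Let_def)
qed

lemma vs_local:
  assumes "\<forall>i\<in>past t n. x i = y i"
  shows "fst (vstate pol x t) = fst (vstate pol y t) \<and> (\<forall>j\<le>n. snd (vstate pol x t) j = snd (vstate pol y t) j)"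
  using assms
proof (induction t)
  case 0 then show ?case by simp
next
  case (Suc t)
  have xy: "\<forall>i\<in>past t n. x i = y i" using Suc.prems past_mono by blast
  note IH = Suc.IH[OF xy]
  have G: "x (Gen t) = y (Gen t)" and C: "x (Coin t) = y (Coin t)"
    using Suc.prems past_in by auto
  have L: "\<And>i. i \<le> n \<Longrightarrow> x (Link i t) = y (Link i t)" using Suc.prems past_in by auto
  have s: "fst (vstate pol x (Suc t)) = fst (vstate pol y (Suc t))"
    using IH G by (simp add: Let_def)
  moreover have "snd (vstate pol x (Suc t)) j = snd (vstate pol y (Suc t)) j" if j: "j \<le> n" for j
  proof -
    consider "j = 0" | "j = 1" | "j \<ge> 2" by linarith
    then show ?thesis
    proof cases
      case 1 then show ?thesis using IH G by (simp add: Let_def)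
    next
      case 2
      have "policy_action pol x t (fst (vstate pol x t) - snd (vstate pol x t) 1) =
            policy_action pol y t (fst (vstate pol y t) - snd (vstate pol y t) 1)"
        using IH C j 2 by (cases pol) auto
      then show ?thesis using IH 2 j L[of 0] by (simp add: Let_def)
    next
      case 3
      then show ?thesis using IH j L[of "j-1"] by (simp add: Let_def)
    qed
  qed
  ultimately show ?case by blast
qed

definition dl :: "policy \<Rightarrow> (idx \<Rightarrow> bool) \<Rightarrow> nat \<Rightarrow> nat \<Rightarrow> nat" where
  "dl pol x j t = fst (vstate pol x t) - snd (vstate pol x t) j"

lemma dl_local: "\<forall>i\<in>past t n. x i = y i \<Longrightarrow> j \<le> n \<Longrightarrow> dl pol x j t = dl pol y j t"
  using vs_local unfolding dl_def by metis

lemma dl_0: "dl pol x j 0 = 0" by (simp add: dl_def)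

lemma dl_relay:
  assumes "j \<ge> 2"
  shows "dl pol x j (Suc t) = (if x (Gen t) then 1 else 0) +
           (if x (Link (j-1) t) then dl pol x (j-1) t else dl pol x j t)"
  using assms vs_le[of pol x t j] vs_le[of pol x t "j-1"] by (auto simp: dl_def Let_def)

lemma vs_0: "snd (vstate pol x t) 0 = fst (vstate pol x t)"
  by (cases t) (auto simp: Let_def)

lemma dl_one:
  "dl pol x 1 (Suc t) = (if x (Gen t) then 1 else 0) +
     (if policy_action pol x t (dl pol x 1 t) \<and> x (Link 0 t) then 0 else dl pol x 1 t)"
  using vs_le[of pol x t 1] vs_0[of pol x t] by (auto simp: dl_def Let_def)


definition cavg :: "(nat \<Rightarrow> real) \<Rightarrow> nat \<Rightarrow> real" where
  "cavg x T = (\<Sum>t<T. x t) / real T"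

lemma cavg_add: "cavg (\<lambda>t. x t + y t) T = cavg x T + cavg y T"
  unfolding cavg_def by (simp add: sum.distrib add_divide_distrib)

lemma cavg_diff: "cavg (\<lambda>t. x t - y t) T = cavg x T - cavg y T"
  unfolding cavg_def by (simp add: sum_subtractf diff_divide_distrib)

lemma cavg_mult: "cavg (\<lambda>t. c * x t) T = c * cavg x T"
  unfolding cavg_def by (simp add: sum_distrib_left[symmetric])

lemma cavg_const: "cavg (\<lambda>t. c) \<longlonglongrightarrow> c"
proof -
  have "eventually (\<lambda>T. cavg (\<lambda>t. c) T = c) sequentially"
    using eventually_gt_at_top[of 0] by eventually_elim (simp add: cavg_def)
  then show ?thesis by (rule tendsto_eventually)
qed

lemma bounded_div:
  assumes "\<And>t. \<bar>w t\<bar> \<le> B"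
  shows "(\<lambda>T. w T / real T) \<longlonglongrightarrow> 0"
proof -
  have "(\<lambda>T. B / real T) \<longlonglongrightarrow> 0" by (rule tendsto_divide_0[OF tendsto_const]) (rule filterlim_at_top_imp_at_infinity[OF filterlim_real_sequentially])
  then show ?thesis
  proof (rule Lim_null_comparison[rotated])
    show "\<forall>\<^sub>F x in sequentially. norm (w x / real x) \<le> B / real x"
      by (intro always_eventually allI) (simp add: abs_divide divide_right_mono assms)
  qed
qed

lemma sum_split_nat: "(\<Sum>s<t+(D::nat). f s) = (\<Sum>s<t. f s) + (\<Sum>k<D. f (t+k))"
  by (induction D) (auto simp: add.assoc)

lemma drift:
  assumes w: "\<And>t. w (Suc t) = w t + y t + d * x t" and d: "d \<noteq> 0"
    and B: "\<And>t. \<bar>w t\<bar> \<le> B" and y: "cavg y \<longlonglongrightarrow> Ly"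
  shows "cavg x \<longlonglongrightarrow> - Ly / d"
proof -
  have tel: "w T - w 0 = (\<Sum>t<T. y t) + d * (\<Sum>t<T. x t)" for T
  proof (induction T)
    case 0 then show ?case by simp
  next
    case (Suc T) then show ?case using w[of T] by (simp add: algebra_simps)
  qed
  have eq: "cavg x T = ((w T - w 0) / real T - cavg y T) / d" for T
  proof -
    have "(\<Sum>t<T. x t) = ((w T - w 0) - (\<Sum>t<T. y t)) / d" using tel[of T] d by (simp add: field_simps)
    then show ?thesis unfolding cavg_def using d by (simp add: diff_divide_distrib mult.commute)
  qed
  have "(\<lambda>T. w T - w 0) = (\<lambda>T. w T - w 0)" ..
  have "(\<lambda>T. (w T - w 0) / real T) \<longlonglongrightarrow> 0"
  proof (rule bounded_div[where B="2*B"])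
    fix t
    have "\<bar>w t\<bar> \<le> B" "\<bar>w 0\<bar> \<le> B" by (rule B)+
    then show "\<bar>w t - w 0\<bar> \<le> 2 * B" by arith
  qed
  then have "(\<lambda>T. ((w T - w 0) / real T - cavg y T) / d) \<longlonglongrightarrow> (0 - Ly) / d"
    by (intro tendsto_intros y d)
  then show ?thesis unfolding eq[abs_def] by simp
qed

lemma cavg_inc_null:
  assumes "cavg u \<longlonglongrightarrow> U"
  shows "(\<lambda>T. u T / (real T + 1)) \<longlonglongrightarrow> 0"
proof -
  have eq: "u T / (real T + 1) = cavg u (Suc T) - cavg u T * (real T / (real T + 1))" for T
  proof (cases "T = 0")
    case True then show ?thesis by (simp add: cavg_def)
  next
    case False
    have 1: "cavg u T * (real T / (real T + 1)) = (\<Sum>t<T. u t) / (real T + 1)"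
      using False unfolding cavg_def by (simp add: divide_simps)
    have 2: "cavg u (Suc T) = ((\<Sum>t<T. u t) + u T) / (real T + 1)"
      unfolding cavg_def by (simp add: add.commute)
    show ?thesis unfolding 1 2 by (simp add: add_divide_distrib)
  qed
  have "(\<lambda>T. real T / (real T + 1)) \<longlonglongrightarrow> 1"
    using LIMSEQ_n_over_Suc_n by (simp add: add.commute)
  then have "(\<lambda>T. cavg u (Suc T) - cavg u T * (real T / (real T + 1))) \<longlonglongrightarrow> U - U * 1"
    by (intro tendsto_intros assms[THEN LIMSEQ_Suc] assms)
  then show ?thesis unfolding eq by simp
qed

lemma lin_rec_null:
  assumes u: "(\<lambda>T. u T / (real T + 1)) \<longlonglongrightarrow> 0"
    and a: "0 \<le> a" "a < 1" and f0: "f 0 = 0" and f: "\<And>t. f (Suc t) = a * f t + u t"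
  shows "(\<lambda>T. f T / real T) \<longlonglongrightarrow> 0"
proof (rule LIMSEQ_I)
  fix r :: real assume r: "0 < r"
  define \<rho> where "\<rho> = 1 - a"
  have \<rho>: "0 < \<rho>" "\<rho> \<le> 1" using a by (auto simp: \<rho>_def)
  define \<epsilon> where "\<epsilon> = r * \<rho> / 4"
  have \<epsilon>: "0 < \<epsilon>" using r \<rho> by (simp add: \<epsilon>_def)
  obtain N where N: "\<And>t. t \<ge> N \<Longrightarrow> norm (u t / (real t + 1) - 0) < \<epsilon>"
    using LIMSEQ_D[OF u \<epsilon>] by blast
  define C where "C = (\<Sum>t<N. \<bar>u t\<bar>)"
  have C0: "C \<ge> 0" unfolding C_def by (auto intro: sum_nonneg)
  have ub: "\<bar>u t\<bar> \<le> \<epsilon> * (real t + 1) + C" for t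
  proof (cases "t \<ge> N")
    case True
    then have "\<bar>u t\<bar> / (real t + 1) < \<epsilon>" using N[of t] by (simp add: abs_divide)
    then have "\<bar>u t\<bar> < \<epsilon> * (real t + 1)" by (simp add: field_simps)
    then show ?thesis using C0 by simp
  next
    case False
    then have "\<bar>u t\<bar> \<le> C" unfolding C_def by (intro member_le_sum) auto
    then show ?thesis using \<epsilon> by (smt (verit) of_nat_0_le_iff mult_nonneg_nonneg)
  qed
  have fb: "\<bar>f t\<bar> \<le> (\<epsilon> * (real t + 1) + C) / \<rho>" for t
  proof (induction t)
    case 0 then show ?case using f0 \<epsilon> C0 \<rho> by simp
  next
    case (Suc t)
    have "\<bar>f (Suc t)\<bar> \<le> \<bar>a * f t\<bar> + \<bar>u t\<bar>" unfolding f[of t] by (rule abs_triangle_ineq)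
    also have "\<bar>a * f t\<bar> + \<bar>u t\<bar> = a * \<bar>f t\<bar> + \<bar>u t\<bar>" using a by (simp add: abs_mult)
    also have "\<dots> \<le> a * ((\<epsilon> * (real t + 1) + C) / \<rho>) + (\<epsilon> * (real t + 1) + C)"
      using Suc ub[of t] a by (intro add_mono mult_left_mono) auto
    also have "\<dots> = (\<epsilon> * (real t + 1) + C) / \<rho>" using \<rho> by (simp add: \<rho>_def field_simps)
    also have "\<dots> \<le> (\<epsilon> * (real (Suc t) + 1) + C) / \<rho>" using \<rho> \<epsilon> by (intro divide_right_mono) auto
    finally show ?case .
  qed
  define N2 where "N2 = max 1 (nat \<lceil>C / \<epsilon>\<rceil>)"
  show "\<exists>no. \<forall>n\<ge>no. norm (f n / real n - 0) < r"
  proof (intro exI allI impI)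
    fix n assume n: "n \<ge> N2"
    then have n1: "real n \<ge> 1" unfolding N2_def by auto
    have "C / \<epsilon> \<le> real n" using n unfolding N2_def by linarith
    then have Cn: "C \<le> \<epsilon> * real n" using \<epsilon> by (simp add: field_simps)
    have en: "\<epsilon> \<le> \<epsilon> * real n" using n1 \<epsilon> by simp
    have "\<epsilon> * (real n + 1) + C \<le> 3 * \<epsilon> * real n" using Cn en by (simp add: distrib_left)
    then have 3: "(\<epsilon> * (real n + 1) + C) / \<rho> \<le> (3 * \<epsilon> * real n) / \<rho>" using \<rho> by (intro divide_right_mono) auto
    have "\<bar>f n\<bar> \<le> (\<epsilon> * (real n + 1) + C) / \<rho>" by (rule fb)
    also note 3
    finally have "\<bar>f n\<bar> / real n \<le> 3 * \<epsilon> / \<rho>" using n1 \<rho> by (simp add: field_simps)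
    also have "\<dots> < r" using r \<rho> by (simp add: \<epsilon>_def)
    finally show "norm (f n / real n - 0) < r" by (simp add: abs_divide)
  qed
qed

lemma lin_rec:
  assumes a: "0 \<le> a" "a < 1" and f0: "f 0 = 0" and f: "\<And>t. f (Suc t) = a * f t + u t"
    and u: "cavg u \<longlonglongrightarrow> U"
  shows "cavg f \<longlonglongrightarrow> U / (1 - a)"
proof -
  have fT: "(\<lambda>T. f T / real T) \<longlonglongrightarrow> 0"
    by (rule lin_rec_null[OF cavg_inc_null[OF u] a f0 f])
  have tel: "(\<Sum>t<T. f t) + f T = a * (\<Sum>t<T. f t) + (\<Sum>t<T. u t)" for T
  proof (induction T)
    case 0 then show ?case using f0 by simp
  next
    case (Suc T)
    have e: "(\<Sum>t<Suc T. f t) = (\<Sum>t<T. f t) + f T" "(\<Sum>t<Suc T. u t) = (\<Sum>t<T. u t) + u T" by simp_all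
    show ?case unfolding e distrib_left f[of T] using Suc.IH by linarith
  qed
  have eq: "cavg f T = (cavg u T - f T / real T) / (1 - a)" for T
  proof -
    have "(\<Sum>t<T. f t) = ((\<Sum>t<T. u t) - f T) / (1 - a)" using tel[of T] a by (simp add: field_simps)
    then show ?thesis unfolding cavg_def using a by (simp add: diff_divide_distrib mult.commute)
  qed
  have "(\<lambda>T. (cavg u T - f T / real T) / (1 - a)) \<longlonglongrightarrow> (U - 0) / (1 - a)"
    using a by (intro tendsto_intros u fT) auto
  then show ?thesis unfolding eq[abs_def] by simp
qed

lemma cavg_periodic:
  assumes D: "D \<ge> 1"
  shows "cavg (\<lambda>t. h (t mod D)) \<longlonglongrightarrow> (\<Sum>r<D. h r) / real D"
proof -
  define H where "H = (\<Sum>r<D. h r) / real D"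
  define w where "w t = (\<Sum>s<t. h (s mod D) - H)" for t
  have blk: "(\<Sum>k<D. h ((t + k) mod D)) = (\<Sum>r<D. h r)" for t
  proof (induction t)
    case 0 then show ?case by simp
  next
    case (Suc t)
    have "(\<Sum>k<Suc D. h ((t + k) mod D)) = h (t mod D) + (\<Sum>k<D. h ((Suc t + k) mod D))"
      by (subst sum.lessThan_Suc_shift) simp
    moreover have "(\<Sum>k<Suc D. h ((t + k) mod D)) = (\<Sum>k<D. h ((t + k) mod D)) + h (t mod D)"
      by simp
    ultimately show ?case using Suc by simp
  qed
  have per: "w (t + D) = w t" for t
  proof -
    have "w (t + D) = w t + (\<Sum>k<D. h ((t + k) mod D) - H)"
      unfolding w_def by (rule sum_split_nat)
    also have "(\<Sum>k<D. h ((t + k) mod D) - H) = 0"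
      using blk[of t] D by (simp add: sum_subtractf H_def)
    finally show ?thesis by simp
  qed
  have wm: "w t = w (t mod D)" for t
  proof (induction t rule: less_induct)
    case (less t)
    show ?case
    proof (cases "t < D")
      case True then show ?thesis by simp
    next
      case False
      then have "t = (t - D) + D" by simp
      then have "w t = w (t - D)" using per[of "t - D"] by simp
      also have "\<dots> = w ((t - D) mod D)" using less[of "t - D"] False D by simp
      also have "(t - D) mod D = t mod D" using False by (simp add: mod_if)
      finally show ?thesis .
    qed
  qed
  define B where "B = (\<Sum>s<D. \<bar>h (s mod D) - H\<bar>)"
  have Bw: "\<bar>w t\<bar> \<le> B" for t
  proof -
    have "\<bar>w (t mod D)\<bar> \<le> (\<Sum>s<t mod D. \<bar>h (s mod D) - H\<bar>)"
      unfolding w_def by (rule sum_abs)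
    also have "\<dots> \<le> B" unfolding B_def using D
      by (intro sum_mono2) auto
    finally show ?thesis using wm[of t] by simp
  qed
  have "cavg (\<lambda>t. h (t mod D)) \<longlonglongrightarrow> - (- H) / 1"
    by (rule drift[where w=w and y="\<lambda>_. - H" and B=B, OF _ _ Bw cavg_const]) (simp_all add: w_def)
  then show ?thesis by (simp add: H_def)
qed


lemma vaoi_dl: "vaoi pol X j t \<omega> = real (dl pol (\<lambda>i. X i \<omega>) j t)"
  unfolding vaoi_def dl_def using vs_le[of pol "\<lambda>i. X i \<omega>" t j] by (simp add: of_nat_diff)

lemma pa_local: "x (Coin t) = y (Coin t) \<Longrightarrow> policy_action pol x t d = policy_action pol y t d"
  by (cases pol) auto

context vsys begin

definition pr :: "idx \<Rightarrow> real" where "pr k = prob {\<omega>\<in>space M. X k \<omega>}"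

lemma dep_ind: "k \<in> S \<Longrightarrow> dep S (\<lambda>\<omega>. if X k \<omega> then 1 else 0)"
  by (rule dep_X)

lemma dep_mult: "dep S W1 \<Longrightarrow> dep S W2 \<Longrightarrow> dep S (\<lambda>\<omega>. W1 \<omega> * W2 \<omega>)"
  by (rule dep_comp2)

lemma dep_vaoi: "j \<le> n \<Longrightarrow> dep (past t n) (vaoi pol X j t)"
  unfolding dep_def
proof (intro exI[of _ "\<lambda>v. real (dl pol v j t)"] ballI)
  fix \<omega> assume "j \<le> n"
  have "dl pol (\<lambda>i. X i \<omega>) j t = dl pol (restrict (\<lambda>i. X i \<omega>) (past t n)) j t"
    by (rule dl_local) (use \<open>j \<le> n\<close> in auto)
  then show "vaoi pol X j t \<omega> = real (dl pol (restrict (\<lambda>i. X i \<omega>) (past t n)) j t)"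
    by (simp add: vaoi_dl)
qed

lemma E_gl:
  assumes S: "finite S" "Gen t \<notin> S" "k \<notin> S" "k \<noteq> Gen t"
    and d: "dep S W1" "dep S W2" "dep S W3" "dep S W4"
  shows "integral\<^sup>L M (\<lambda>\<omega>. W1 \<omega> + W2 \<omega> * (if X (Gen t) \<omega> then 1 else 0) + W3 \<omega> * (if X k \<omega> then 1 else 0)
            + W4 \<omega> * (if X (Gen t) \<omega> then 1 else 0) * (if X k \<omega> then 1 else 0)) =
         integral\<^sup>L M W1 + pr (Gen t) * integral\<^sup>L M W2 + pr k * integral\<^sup>L M W3
           + pr (Gen t) * pr k * integral\<^sup>L M W4"
proof -
  let ?g = "\<lambda>\<omega>. if X (Gen t) \<omega> then 1 else (0::real)"
  let ?l = "\<lambda>\<omega>. if X k \<omega> then 1 else (0::real)"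
  define S' where "S' = insert k (insert (Gen t) S)"
  have fS': "finite S'" using S by (simp add: S'_def)
  have dm: "dep S' W" if "dep S W" for W using that by (rule dep_mono) (auto simp: S'_def)
  have dg: "dep S' ?g" "dep S' ?l" by (auto intro!: dep_ind simp: S'_def)
  have i1: "integrable M W1" by (rule dep_integrable[OF fS' dm[OF d(1)]])
  have i2: "integrable M (\<lambda>\<omega>. W2 \<omega> * ?g \<omega>)" by (rule dep_integrable[OF fS' dep_mult[OF dm[OF d(2)] dg(1)]])
  have i3: "integrable M (\<lambda>\<omega>. W3 \<omega> * ?l \<omega>)" by (rule dep_integrable[OF fS' dep_mult[OF dm[OF d(3)] dg(2)]])
  have i4: "integrable M (\<lambda>\<omega>. W4 \<omega> * ?g \<omega> * ?l \<omega>)"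
    by (rule dep_integrable[OF fS' dep_mult[OF dep_mult[OF dm[OF d(4)] dg(1)] dg(2)]])
  have "integral\<^sup>L M (\<lambda>\<omega>. W1 \<omega> + W2 \<omega> * ?g \<omega> + W3 \<omega> * ?l \<omega> + W4 \<omega> * ?g \<omega> * ?l \<omega>) =
     integral\<^sup>L M W1 + integral\<^sup>L M (\<lambda>\<omega>. W2 \<omega> * ?g \<omega>) + integral\<^sup>L M (\<lambda>\<omega>. W3 \<omega> * ?l \<omega>) + integral\<^sup>L M (\<lambda>\<omega>. W4 \<omega> * ?g \<omega> * ?l \<omega>)"
    using i1 i2 i3 i4 by (simp add: Bochner_Integration.integral_add Bochner_Integration.integrable_add)
  also have "integral\<^sup>L M (\<lambda>\<omega>. W2 \<omega> * ?g \<omega>) = integral\<^sup>L M W2 * pr (Gen t)"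
    unfolding pr_def by (rule dep_indep[OF S(1) S(2) d(2)])
  also have "integral\<^sup>L M (\<lambda>\<omega>. W3 \<omega> * ?l \<omega>) = integral\<^sup>L M W3 * pr k"
    unfolding pr_def by (rule dep_indep[OF S(1) S(3) d(3)])
  also have "integral\<^sup>L M (\<lambda>\<omega>. W4 \<omega> * ?g \<omega> * ?l \<omega>) = integral\<^sup>L M (\<lambda>\<omega>. W4 \<omega> * ?g \<omega>) * pr k"
    unfolding pr_def
    by (rule dep_indep[where S="insert (Gen t) S", OF _ _ dep_mult[OF dep_mono[OF d(4)] dep_ind]]) (use S in auto)
  also have "integral\<^sup>L M (\<lambda>\<omega>. W4 \<omega> * ?g \<omega>) = integral\<^sup>L M W4 * pr (Gen t)"
    unfolding pr_def by (rule dep_indep[OF S(1) S(2) d(4)])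
  finally show ?thesis by (simp add: algebra_simps)
qed

lemma relay_rec:
  assumes i: "1 \<le> i"
  shows "integral\<^sup>L M (vaoi pol X (Suc i) (Suc t)) =
     pr (Gen t) + pr (Link i t) * integral\<^sup>L M (vaoi pol X i t)
       + (1 - pr (Link i t)) * integral\<^sup>L M (vaoi pol X (Suc i) t)"
proof -
  let ?S = "past t (Suc i)"
  have dA: "dep ?S (vaoi pol X (Suc i) t)" "dep ?S (vaoi pol X i t)" by (auto intro: dep_vaoi)
  have iA: "integrable M (vaoi pol X (Suc i) t)" "integrable M (vaoi pol X i t)"
    using dA by (auto intro: dep_integrable finite_past)
  have "integral\<^sup>L M (vaoi pol X (Suc i) (Suc t)) = integral\<^sup>L M (\<lambda>\<omega>. vaoi pol X (Suc i) t \<omega> + 1 * (if X (Gen t) \<omega> then 1 else 0)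
     + (vaoi pol X i t \<omega> - vaoi pol X (Suc i) t \<omega>) * (if X (Link i t) \<omega> then 1 else 0)
     + 0 * (if X (Gen t) \<omega> then 1 else 0) * (if X (Link i t) \<omega> then 1 else 0))"
  proof (rule Bochner_Integration.integral_cong[OF refl])
    fix \<omega>
    have "Suc i \<ge> 2" using i by simp
    from dl_relay[OF this, of pol "\<lambda>i. X i \<omega>" t] show "vaoi pol X (Suc i) (Suc t) \<omega> = vaoi pol X (Suc i) t \<omega> + 1 * (if X (Gen t) \<omega> then 1 else 0)
     + (vaoi pol X i t \<omega> - vaoi pol X (Suc i) t \<omega>) * (if X (Link i t) \<omega> then 1 else 0)
     + 0 * (if X (Gen t) \<omega> then 1 else 0) * (if X (Link i t) \<omega> then 1 else 0)"
      by (simp add: vaoi_dl)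
  qed
  also have "\<dots> = integral\<^sup>L M (vaoi pol X (Suc i) t) + pr (Gen t) * integral\<^sup>L M (\<lambda>_. 1) +
      pr (Link i t) * integral\<^sup>L M (\<lambda>\<omega>. vaoi pol X i t \<omega> - vaoi pol X (Suc i) t \<omega>) + pr (Gen t) * pr (Link i t) * integral\<^sup>L M (\<lambda>_. 0)"
    by (rule E_gl[OF finite_past past_notin(1) past_notin(3) _ dA(1) dep_const dep_comp2[OF dA(2) dA(1)] dep_const]) simp
  also have "\<dots> = pr (Gen t) + pr (Link i t) * integral\<^sup>L M (vaoi pol X i t)
       + (1 - pr (Link i t)) * integral\<^sup>L M (vaoi pol X (Suc i) t)"
    using iA by (simp add: Bochner_Integration.integral_diff algebra_simps prob_space)
  finally show ?thesis .
qed

definition act :: "policy \<Rightarrow> nat \<Rightarrow> 'w \<Rightarrow> real" where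
  "act pol t \<omega> = (if policy_action pol (\<lambda>i. X i \<omega>) t (dl pol (\<lambda>i. X i \<omega>) 1 t) then 1 else 0)"

lemma dep_act: "dep (insert (Coin t) (past t 1)) (act pol t)"
  unfolding dep_def
proof (intro exI[of _ "\<lambda>v. if policy_action pol v t (dl pol v 1 t) then 1 else 0"] ballI)
  fix \<omega>
  let ?S = "insert (Coin t) (past t 1)"
  let ?x = "\<lambda>i. X i \<omega>"
  have "dl pol ?x 1 t = dl pol (restrict ?x ?S) 1 t" by (rule dl_local) auto
  moreover have "policy_action pol ?x t n = policy_action pol (restrict ?x ?S) t n" for n
    by (rule pa_local) auto
  ultimately show "act pol t \<omega> = (if policy_action pol (restrict ?x ?S) t (dl pol (restrict ?x ?S) 1 t) then 1 else 0)"
    unfolding act_def by simp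
qed

lemma node1_rec:
  "integral\<^sup>L M (vaoi pol X 1 (Suc t)) =
     pr (Gen t) + integral\<^sup>L M (vaoi pol X 1 t) - pr (Link 0 t) * integral\<^sup>L M (\<lambda>\<omega>. act pol t \<omega> * vaoi pol X 1 t \<omega>)"
proof -
  let ?S = "insert (Coin t) (past t 1)"
  have fS: "finite ?S" by (simp add: finite_past)
  have dA: "dep ?S (vaoi pol X 1 t)" by (rule dep_mono[OF dep_vaoi]) auto
  have dB: "dep ?S (\<lambda>\<omega>. act pol t \<omega> * vaoi pol X 1 t \<omega>)" by (rule dep_mult[OF dep_act dA])
  have "integral\<^sup>L M (vaoi pol X 1 (Suc t)) = integral\<^sup>L M (\<lambda>\<omega>. vaoi pol X 1 t \<omega> + 1 * (if X (Gen t) \<omega> then 1 else 0)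
     + (- (act pol t \<omega> * vaoi pol X 1 t \<omega>)) * (if X (Link 0 t) \<omega> then 1 else 0)
     + 0 * (if X (Gen t) \<omega> then 1 else 0) * (if X (Link 0 t) \<omega> then 1 else 0))"
  proof (rule Bochner_Integration.integral_cong[OF refl])
    fix \<omega>
    from dl_one[of pol "\<lambda>i. X i \<omega>" t] show "vaoi pol X 1 (Suc t) \<omega> = vaoi pol X 1 t \<omega> + 1 * (if X (Gen t) \<omega> then 1 else 0)
     + (- (act pol t \<omega> * vaoi pol X 1 t \<omega>)) * (if X (Link 0 t) \<omega> then 1 else 0)
     + 0 * (if X (Gen t) \<omega> then 1 else 0) * (if X (Link 0 t) \<omega> then 1 else 0)"
      by (simp add: vaoi_dl act_def)
  qed
  also have "\<dots> = integral\<^sup>L M (vaoi pol X 1 t) + pr (Gen t) * integral\<^sup>L M (\<lambda>_. 1) +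
      pr (Link 0 t) * integral\<^sup>L M (\<lambda>\<omega>. - (act pol t \<omega> * vaoi pol X 1 t \<omega>)) + pr (Gen t) * pr (Link 0 t) * integral\<^sup>L M (\<lambda>_. 0)"
    by (rule E_gl[OF fS _ _ _ dA dep_const dep_comp[OF dB] dep_const]) (auto simp: past_notin)
  also have "\<dots> = pr (Gen t) + integral\<^sup>L M (vaoi pol X 1 t) - pr (Link 0 t) * integral\<^sup>L M (\<lambda>\<omega>. act pol t \<omega> * vaoi pol X 1 t \<omega>)"
    by (simp add: prob_space)
  finally show ?thesis .
qed

end

lemma thr_pt:
  fixes n T :: nat and G L :: bool
  assumes T: "T \<ge> 1"
  defines "d \<equiv> real n"
    and "d' \<equiv> real ((if G then 1 else 0) + (if T \<le> n \<and> L then 0 else n))"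
    and "g \<equiv> (if G then 1 else 0 :: real)" and "l \<equiv> (if L then 1 else 0 :: real)"
    and "r \<equiv> (if real T \<le> real n then 1 else 0 :: real)"
  shows "min d' (real T) = min d (real T) + (1 - r) * g + (- (r * real T)) * l + r * g * l"
    and "(min d' (real T))^2 = (min d (real T))^2 + (2 * min d (real T) - 2 * real T * r + 1 - r) * g
            + (- (r * (real T)^2)) * l + r * g * l"
    and "d' - min d' (real T) = (d - min d (real T)) + r * g + (- (d - min d (real T))) * l + (- r) * g * l"
  using T unfolding d_def d'_def g_def l_def r_def
  by (cases G; cases L; cases "T \<le> n"; auto simp: min_def power2_eq_square algebra_simps)+

context vsys begin

lemma vaoi_nonneg: "vaoi pol X j t \<omega> \<ge> 0" by (simp add: vaoi_dl)

lemma E0: "integral\<^sup>L M (vaoi pol X j 0) = 0"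
proof -
  have "vaoi pol X j 0 = (\<lambda>_. 0)" by (rule ext) (simp add: vaoi_def)
  then show ?thesis by simp
qed

lemma E_nonneg: "integral\<^sup>L M (vaoi pol X j t) \<ge> 0"
  by (rule Bochner_Integration.integral_nonneg) (rule vaoi_nonneg)

lemma E_bound:
  fixes W :: "'w \<Rightarrow> real"
  assumes "integrable M W" "\<And>\<omega>. \<omega> \<in> space M \<Longrightarrow> 0 \<le> W \<omega> \<and> W \<omega> \<le> B"
  shows "\<bar>integral\<^sup>L M W\<bar> \<le> B"
proof -
  have "0 \<le> integral\<^sup>L M W" by (rule Bochner_Integration.integral_nonneg) (use assms(2) in auto)
  moreover have "integral\<^sup>L M W \<le> integral\<^sup>L M (\<lambda>_. B)"
    using assms by (intro Bochner_Integration.integral_mono) auto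
  ultimately show ?thesis by (simp add: prob_space)
qed

lemma int_vaoi1: "integrable M (vaoi pol X 1 t)"
  by (rule dep_integrable[OF finite_past dep_vaoi[of 1 1]]) simp

lemma conv_RS:
  assumes pol: "pol = RandStat \<alpha>" and \<alpha>: "0 < \<alpha>" "\<alpha> \<le> 1" "\<And>t. pr (Coin t) = \<alpha>"
    and pg: "\<And>t. pr (Gen t) = pg" and r0: "\<And>t. pr (Link 0 t) = \<rho>0" "0 < \<rho>0" "\<rho>0 < 1"
  shows "cavg (\<lambda>t. integral\<^sup>L M (vaoi pol X 1 t)) \<longlonglongrightarrow> pg / (\<rho>0 * \<alpha>)"
proof -
  let ?e = "\<lambda>t. integral\<^sup>L M (vaoi pol X 1 t)"
  have rec: "?e (Suc t) = (1 - \<rho>0 * \<alpha>) * ?e t + pg" for t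
  proof -
    have "integral\<^sup>L M (\<lambda>\<omega>. act pol t \<omega> * vaoi pol X 1 t \<omega>) =
          integral\<^sup>L M (\<lambda>\<omega>. vaoi pol X 1 t \<omega> * (if X (Coin t) \<omega> then 1 else 0))"
      by (rule Bochner_Integration.integral_cong[OF refl]) (simp add: act_def pol)
    also have "\<dots> = ?e t * \<alpha>"
      using dep_indep[OF finite_past past_notin(2) dep_vaoi[of 1 1]] \<alpha>(3) by (simp add: pr_def)
    finally show ?thesis using node1_rec[of pol t] pg r0 by (simp add: algebra_simps)
  qed
  have a: "0 \<le> 1 - \<rho>0 * \<alpha>" "1 - \<rho>0 * \<alpha> < 1"
    using r0 \<alpha> by (auto simp: mult_le_one)
  have "cavg ?e \<longlonglongrightarrow> pg / (1 - (1 - \<rho>0 * \<alpha>))"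
    by (rule lin_rec[OF a E0 rec cavg_const])
  then show ?thesis by simp
qed

lemma conv_T0:
  assumes pol: "pol = Threshold 0"
    and pg: "\<And>t. pr (Gen t) = pg" and r0: "\<And>t. pr (Link 0 t) = \<rho>0" "0 < \<rho>0" "\<rho>0 < 1"
  shows "cavg (\<lambda>t. integral\<^sup>L M (vaoi pol X 1 t)) \<longlonglongrightarrow> pg / \<rho>0"
proof -
  let ?e = "\<lambda>t. integral\<^sup>L M (vaoi pol X 1 t)"
  have rec: "?e (Suc t) = (1 - \<rho>0) * ?e t + pg" for t
  proof -
    have "integral\<^sup>L M (\<lambda>\<omega>. act pol t \<omega> * vaoi pol X 1 t \<omega>) = ?e t"
      by (rule Bochner_Integration.integral_cong[OF refl]) (simp add: act_def pol)
    then show ?thesis using node1_rec[of pol t] pg r0 by (simp add: algebra_simps)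
  qed
  have "cavg ?e \<longlonglongrightarrow> pg / (1 - (1 - \<rho>0))"
    by (rule lin_rec[OF _ _ E0 rec cavg_const]) (use r0 in auto)
  then show ?thesis by simp
qed

lemma conv_U:
  assumes pol: "pol = Uniform D" and D: "D \<ge> 1"
    and pg: "\<And>t. pr (Gen t) = pg" "0 < pg" and r0: "\<And>t. pr (Link 0 t) = \<rho>0" "0 < \<rho>0" "\<rho>0 < 1"
  shows "\<exists>L. cavg (\<lambda>t. integral\<^sup>L M (vaoi pol X 1 t)) \<longlonglongrightarrow> L"
proof -
  let ?e = "\<lambda>t. integral\<^sup>L M (vaoi pol X 1 t)"
  define m where "m t = (if t mod D = 0 then 1 - \<rho>0 else 1)" for t
  have rec: "?e (Suc t) = pg + m t * ?e t" for t
  proof -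
    have A: "integral\<^sup>L M (\<lambda>\<omega>. act pol t \<omega> * vaoi pol X 1 t \<omega>) = (if t mod D = 0 then ?e t else 0)"
      by (simp add: act_def pol)
    show ?thesis
    proof (cases "t mod D = 0")
      case True
      then have B: "integral\<^sup>L M (\<lambda>\<omega>. act pol t \<omega> * vaoi pol X 1 t \<omega>) = ?e t" and mt: "m t = 1 - \<rho>0"
        using A by (simp_all add: m_def)
      show ?thesis unfolding mt using node1_rec[of pol t] pg r0 B by (simp add: algebra_simps)
    next
      case False
      then have B: "integral\<^sup>L M (\<lambda>\<omega>. act pol t \<omega> * vaoi pol X 1 t \<omega>) = 0" and mt: "m t = 1"
        using A by (simp_all add: m_def)
      show ?thesis unfolding mt using node1_rec[of pol t] pg r0 B by (simp add: algebra_simps)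
    qed
  qed
  define C where "C = real D / \<rho>0"
  have C1: "C \<ge> 1" using D r0 by (simp add: C_def field_simps)
  define c where "c r = C + 1 - (if r = 0 then real D else real r)" for r
  have c_rng: "1 \<le> c r \<and> c r \<le> C" if "r < D" for r
  proof -
    have "real D \<le> C" using r0 D by (simp add: C_def field_simps mult_left_le)
    then show ?thesis using that D by (auto simp: c_def)
  qed
  have c_step: "c (Suc r mod D) * m r = c r - 1" if "r < D" for r
  proof (cases "r = 0")
    case True
    show ?thesis
    proof (cases "D = 1")
      case True
      then show ?thesis using \<open>r = 0\<close> r0 by (simp add: c_def m_def C_def field_simps)
    next
      case False
      then have "Suc 0 mod D = 1" using D by simp
      then show ?thesis using \<open>r = 0\<close> r0 by (simp add: c_def m_def C_def field_simps)
    qed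
  next
    case False
    then have mr: "m r = 1" using that by (simp add: m_def)
    show ?thesis
    proof (cases "Suc r = D")
      case True then show ?thesis using mr False by (simp add: c_def)
    next
      case F2: False
      then have "Suc r mod D = Suc r" using that by simp
      then show ?thesis using mr False by (simp add: c_def)
    qed
  qed
  define w where "w t = c (t mod D) * ?e t" for t
  define y where "y t = pg * c (Suc t mod D)" for t
  have mt: "m t = m (t mod D)" for t using D by (simp add: m_def)
  have w_rec: "w (Suc t) = w t + y t + (-1) * ?e t" for t
  proof -
    have "t mod D < D" using D by simp
    have "Suc t mod D = Suc (t mod D) mod D" by (simp add: mod_Suc_eq)
    then have cm: "c (Suc t mod D) * m t = c (t mod D) - 1" using c_step[OF \<open>t mod D < D\<close>] mt[of t] by simp
    have "w (Suc t) = c (Suc t mod D) * pg + (c (Suc t mod D) * m t) * ?e t"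
      unfolding w_def rec by (simp add: algebra_simps)
    also have "\<dots> = y t + (c (t mod D) - 1) * ?e t" unfolding cm y_def by simp
    also have "\<dots> = w t + y t + (-1) * ?e t" by (simp add: w_def algebra_simps)
    finally show ?thesis .
  qed
  have w_bd: "0 \<le> w t \<and> w t \<le> C * C * pg" for t
  proof (induction t)
    case 0 then show ?case using C1 pg by (simp add: w_def E0)
  next
    case (Suc t)
    have r: "t mod D < D" "Suc t mod D < D" using D by simp_all
    have e0: "?e t \<ge> 0" by (rule E_nonneg)
    have "c (t mod D) > 0" using c_rng[OF r(1)] by simp
    then have ew: "?e t = w t / c (t mod D)" by (simp add: w_def)
    have "w t / C \<le> w t / c (t mod D)" using Suc c_rng[OF r(1)]
      by (intro divide_left_mono) auto
    then have eC: "w t / C \<le> ?e t" using ew by simp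
    have "y t \<le> pg * C" unfolding y_def using c_rng[OF r(2)] pg(2) by (intro mult_left_mono) auto
    then have "w (Suc t) \<le> w t - w t / C + C * pg"
      using w_rec[of t] eC by (simp add: mult.commute)
    also have "\<dots> = w t * (1 - 1 / C) + C * pg" by (simp add: algebra_simps)
    also have "\<dots> \<le> C * C * pg * (1 - 1 / C) + C * pg"
      using Suc C1 pg(2) by (intro add_mono mult_right_mono) (auto simp: field_simps)
    also have "\<dots> = C * C * pg" using C1 by (simp add: field_simps)
    finally have up: "w (Suc t) \<le> C * C * pg" .
    have "w (Suc t) \<ge> 0" unfolding w_def using c_rng[OF r(2)] E_nonneg by simp
    then show ?case using up by simp
  qed
  have wB: "\<bar>w t\<bar> \<le> C * C * pg" for t using w_bd[of t] by simp
  define h where "h r = pg * c (Suc r mod D)" for r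
  have y_eq: "y = (\<lambda>t. h (t mod D))"
    by (rule ext) (simp add: y_def h_def mod_Suc_eq)
  have "cavg y \<longlonglongrightarrow> (\<Sum>r<D. h r) / real D" unfolding y_eq by (rule cavg_periodic[OF D])
  from drift[OF w_rec _ wB this] show ?thesis by auto
qed

end

lemma thr_step: "dl (Threshold T) x 1 (Suc t) = (if x (Gen t) then 1 else 0) +
   (if T \<le> dl (Threshold T) x 1 t \<and> x (Link 0 t) then 0 else dl (Threshold T) x 1 t)"
  using dl_one[of "Threshold T" x t] by simp

context vsys begin

lemma conv_T:
  assumes pol: "pol = Threshold T" and T: "T \<ge> 1"
    and pg: "\<And>t. pr (Gen t) = pg" "0 < pg" "pg < 1" and r0: "\<And>t. pr (Link 0 t) = \<rho>0" "0 < \<rho>0" "\<rho>0 < 1"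
  shows "\<exists>L. cavg (\<lambda>t. integral\<^sup>L M (vaoi pol X 1 t)) \<longlonglongrightarrow> L"
proof -
  define d where "d t \<omega> = vaoi pol X 1 t \<omega>" for t \<omega>
  define Yf where "Yf t \<omega> = min (d t \<omega>) (real T)" for t \<omega>
  define rf where "rf t \<omega> = (if real T \<le> d t \<omega> then 1 else 0 :: real)" for t \<omega>
  define Zf where "Zf t \<omega> = d t \<omega> - Yf t \<omega>" for t \<omega>
  define eY where "eY t = integral\<^sup>L M (Yf t)" for t
  define eY2 where "eY2 t = integral\<^sup>L M (\<lambda>\<omega>. (Yf t \<omega>)^2)" for t
  define R where "R t = integral\<^sup>L M (rf t)" for t
  define eZ where "eZ t = integral\<^sup>L M (Zf t)" for t
  let ?S = "\<lambda>t. past t 1"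
  have dd: "dep (?S t) (d t)" for t unfolding d_def[abs_def] by (rule dep_vaoi) simp
  have dY: "dep (?S t) (Yf t)" for t unfolding Yf_def[abs_def] by (rule dep_comp[OF dd])
  have dY2: "dep (?S t) (\<lambda>\<omega>. (Yf t \<omega>)^2)" for t by (rule dep_comp[OF dY])
  have dr: "dep (?S t) (rf t)" for t unfolding rf_def[abs_def] by (rule dep_comp[OF dd])
  have dZ: "dep (?S t) (Zf t)" for t unfolding Zf_def[abs_def] by (rule dep_comp2[OF dd dY])
  have d1r: "dep (?S t) (\<lambda>\<omega>. 1 - rf t \<omega>)" for t by (rule dep_comp[OF dr])
  have dTr: "dep (?S t) (\<lambda>\<omega>. - (rf t \<omega> * real T))" for t by (rule dep_comp[OF dr])
  have dTr2: "dep (?S t) (\<lambda>\<omega>. - (rf t \<omega> * (real T)^2))" for t by (rule dep_comp[OF dr])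
  have dmr: "dep (?S t) (\<lambda>\<omega>. - rf t \<omega>)" for t by (rule dep_comp[OF dr])
  have dmZ: "dep (?S t) (\<lambda>\<omega>. - Zf t \<omega>)" for t by (rule dep_comp[OF dZ])
  have dW2: "dep (?S t) (\<lambda>\<omega>. 2 * Yf t \<omega> - 2 * real T * rf t \<omega> + 1 - rf t \<omega>)" for t
    by (rule dep_comp2[OF dY dr])
  have int: "integrable M W" if "dep (?S t) W" for W t by (rule dep_integrable[OF finite_past that])
  have gl: "Gen t \<notin> ?S t" "Link 0 t \<notin> ?S t" "Link 0 t \<noteq> Gen t" for t by (auto simp: past_notin)
  have ptd: "d (Suc t) \<omega> = real ((if X (Gen t) \<omega> then 1 else 0) +
     (if T \<le> dl pol (\<lambda>i. X i \<omega>) 1 t \<and> X (Link 0 t) \<omega> then 0 else dl pol (\<lambda>i. X i \<omega>) 1 t))"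
    and pt0: "d t \<omega> = real (dl pol (\<lambda>i. X i \<omega>) 1 t)" for t \<omega>
    unfolding pol d_def vaoi_dl thr_step by simp_all
  have iR: "integrable M (rf t)" for t by (rule int[OF dr])
  have iY: "integrable M (Yf t)" for t by (rule int[OF dY])
  have iZ: "integrable M (Zf t)" for t by (rule int[OF dZ])
  have recY: "eY (Suc t) = eY t + pg + (pg * \<rho>0 - pg - \<rho>0 * real T) * R t" for t
  proof -
    have "eY (Suc t) = integral\<^sup>L M (\<lambda>\<omega>. Yf t \<omega> + (1 - rf t \<omega>) * (if X (Gen t) \<omega> then 1 else 0)
        + (- (rf t \<omega> * real T)) * (if X (Link 0 t) \<omega> then 1 else 0)
        + rf t \<omega> * (if X (Gen t) \<omega> then 1 else 0) * (if X (Link 0 t) \<omega> then 1 else 0))"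
      unfolding eY_def
      apply (rule Bochner_Integration.integral_cong[OF refl])
      subgoal for \<omega> unfolding Yf_def rf_def ptd[of t \<omega>] pt0[of t \<omega>] by (rule thr_pt(1)[OF T])
      done
    also have "\<dots> = eY t + pg * integral\<^sup>L M (\<lambda>\<omega>. 1 - rf t \<omega>) + \<rho>0 * integral\<^sup>L M (\<lambda>\<omega>. - (rf t \<omega> * real T))
        + pg * \<rho>0 * R t"
      unfolding eY_def R_def using E_gl[OF finite_past gl dY d1r dTr dr] by (simp only: pg(1) r0(1))
    also have "\<dots> = eY t + pg + (pg * \<rho>0 - pg - \<rho>0 * real T) * R t"
      using iR[of t] by (simp add: R_def Bochner_Integration.integral_diff prob_space algebra_simps)
    finally show ?thesis .
  qed
  define k2 where "k2 = pg * \<rho>0 - pg - 2 * pg * real T - \<rho>0 * (real T)^2"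
  have recY2: "eY2 (Suc t) = eY2 t + (pg + k2 * R t) + 2 * pg * eY t" for t
  proof -
    have "eY2 (Suc t) = integral\<^sup>L M (\<lambda>\<omega>. (Yf t \<omega>)^2 + (2 * Yf t \<omega> - 2 * real T * rf t \<omega> + 1 - rf t \<omega>) * (if X (Gen t) \<omega> then 1 else 0)
        + (- (rf t \<omega> * (real T)^2)) * (if X (Link 0 t) \<omega> then 1 else 0)
        + rf t \<omega> * (if X (Gen t) \<omega> then 1 else 0) * (if X (Link 0 t) \<omega> then 1 else 0))"
      unfolding eY2_def
      apply (rule Bochner_Integration.integral_cong[OF refl])
      subgoal for \<omega> unfolding Yf_def rf_def ptd[of t \<omega>] pt0[of t \<omega>] by (rule thr_pt(2)[OF T])
      done
    also have "\<dots> = eY2 t + pg * integral\<^sup>L M (\<lambda>\<omega>. 2 * Yf t \<omega> - 2 * real T * rf t \<omega> + 1 - rf t \<omega>)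
        + \<rho>0 * integral\<^sup>L M (\<lambda>\<omega>. - (rf t \<omega> * (real T)^2)) + pg * \<rho>0 * R t"
      unfolding eY2_def R_def using E_gl[OF finite_past gl dY2 dW2 dTr2 dr] by (simp only: pg(1) r0(1))
    also have "integral\<^sup>L M (\<lambda>\<omega>. 2 * Yf t \<omega> - 2 * real T * rf t \<omega> + 1 - rf t \<omega>) = 2 * eY t - 2 * real T * R t + 1 - R t"
      using iR[of t] iY[of t] unfolding eY_def R_def
      by (simp add: Bochner_Integration.integral_diff Bochner_Integration.integral_add prob_space)
    finally show ?thesis using iR[of t] by (simp add: R_def k2_def algebra_simps)
  qed
  have recZ: "eZ (Suc t) = (1 - \<rho>0) * eZ t + (1 - \<rho>0) * pg * R t" for t
  proof -
    have "eZ (Suc t) = integral\<^sup>L M (\<lambda>\<omega>. Zf t \<omega> + rf t \<omega> * (if X (Gen t) \<omega> then 1 else 0)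
        + (- Zf t \<omega>) * (if X (Link 0 t) \<omega> then 1 else 0)
        + (- rf t \<omega>) * (if X (Gen t) \<omega> then 1 else 0) * (if X (Link 0 t) \<omega> then 1 else 0))"
      unfolding eZ_def
      apply (rule Bochner_Integration.integral_cong[OF refl])
      subgoal for \<omega> unfolding Zf_def Yf_def rf_def ptd[of t \<omega>] pt0[of t \<omega>] by (rule thr_pt(3)[OF T])
      done
    also have "\<dots> = eZ t + pg * R t + \<rho>0 * integral\<^sup>L M (\<lambda>\<omega>. - Zf t \<omega>) + pg * \<rho>0 * integral\<^sup>L M (\<lambda>\<omega>. - rf t \<omega>)"
      unfolding eZ_def R_def using E_gl[OF finite_past gl dZ dr dmZ dmr] by (simp only: pg(1) r0(1))
    also have "\<dots> = (1 - \<rho>0) * eZ t + (1 - \<rho>0) * pg * R t"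
      by (simp add: eZ_def R_def algebra_simps)
    finally show ?thesis .
  qed
  have Ybd: "0 \<le> Yf t \<omega> \<and> Yf t \<omega> \<le> real T" for t \<omega>
    unfolding Yf_def d_def using vaoi_nonneg[of pol j t \<omega>] by (simp add: vaoi_nonneg)
  have bY: "\<bar>eY t\<bar> \<le> real T" for t unfolding eY_def by (rule E_bound[OF iY]) (use Ybd in auto)
  have bY2: "\<bar>eY2 t\<bar> \<le> (real T)^2" for t unfolding eY2_def
    by (rule E_bound[OF int[OF dY2]]) (use Ybd in \<open>auto intro: power_mono\<close>)
  define k1 where "k1 = pg * \<rho>0 - pg - \<rho>0 * real T"
  have k1: "k1 \<noteq> 0"
  proof -
    have "pg * \<rho>0 < pg" using pg r0 by simp
    moreover have "0 \<le> \<rho>0 * real T" using r0 by simp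
    ultimately show ?thesis unfolding k1_def by linarith
  qed
  define Rs where "Rs = - pg / k1"
  have cR: "cavg R \<longlonglongrightarrow> Rs"
    unfolding Rs_def by (rule drift[where w=eY and B="real T", OF _ k1 bY cavg_const]) (simp add: recY k1_def)
  have cy: "cavg (\<lambda>t. pg + k2 * R t) \<longlonglongrightarrow> pg + k2 * Rs"
  proof -
    have "cavg (\<lambda>t. pg + k2 * R t) = (\<lambda>T. cavg (\<lambda>_. pg) T + k2 * cavg R T)"
      by (rule ext) (simp add: cavg_add cavg_mult)
    then show ?thesis by (simp add: tendsto_add[OF cavg_const tendsto_mult[OF tendsto_const cR]])
  qed
  have cY: "cavg eY \<longlonglongrightarrow> - (pg + k2 * Rs) / (2 * pg)"
    by (rule drift[where w=eY2 and B="(real T)^2", OF _ _ bY2 cy]) (use pg recY2 in auto)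
  have eZ0: "eZ 0 = 0"
  proof -
    have "Zf 0 = (\<lambda>_. 0)" by (rule ext) (simp add: Zf_def Yf_def d_def vaoi_def)
    then show ?thesis by (simp add: eZ_def)
  qed
  have cu: "cavg (\<lambda>t. (1 - \<rho>0) * pg * R t) \<longlonglongrightarrow> (1 - \<rho>0) * pg * Rs"
    unfolding cavg_mult by (intro tendsto_mult tendsto_const cR)
  have cZ: "cavg eZ \<longlonglongrightarrow> (1 - \<rho>0) * pg * Rs / (1 - (1 - \<rho>0))"
    by (rule lin_rec[OF _ _ eZ0 recZ cu]) (use r0 in auto)
  have e_eq: "integral\<^sup>L M (vaoi pol X 1 t) = eY t + eZ t" for t
  proof -
    have "integral\<^sup>L M (vaoi pol X 1 t) = integral\<^sup>L M (\<lambda>\<omega>. Yf t \<omega> + Zf t \<omega>)"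
      by (rule Bochner_Integration.integral_cong[OF refl]) (simp add: Zf_def d_def)
    then show ?thesis using iY[of t] iZ[of t] by (simp add: eY_def eZ_def)
  qed
  have "cavg (\<lambda>t. integral\<^sup>L M (vaoi pol X 1 t)) = (\<lambda>T. cavg eY T + cavg eZ T)"
    unfolding e_eq by (rule ext) (rule cavg_add)
  then have "cavg (\<lambda>t. integral\<^sup>L M (vaoi pol X 1 t)) \<longlonglongrightarrow> - (pg + k2 * Rs) / (2 * pg) + (1 - \<rho>0) * pg * Rs / (1 - (1 - \<rho>0))"
    using tendsto_add[OF cY cZ] by simp
  then show ?thesis by blast
qed

end

context vsys begin

lemma relay_conv:
  assumes pg: "\<And>t. pr (Gen t) = pg"
    and rho: "\<forall>i\<in>{1..N}. 0 < \<rho> i \<and> \<rho> i \<le> 1"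
    and prL: "\<forall>i\<le>N. \<forall>t. pr (Link i t) = \<rho> i"
    and c1: "cavg (\<lambda>t. integral\<^sup>L M (vaoi pol X 1 t)) \<longlonglongrightarrow> L"
  shows "n \<le> N \<Longrightarrow> cavg (\<lambda>t. integral\<^sup>L M (vaoi pol X (Suc n) t)) \<longlonglongrightarrow> L + pg * (\<Sum>i = 1..n. 1 / \<rho> i)"
proof (induction n)
  case 0 then show ?case using c1 by simp
next
  case (Suc n)
  let ?r = "\<rho> (Suc n)"
  have r: "0 < ?r" "?r \<le> 1" using rho Suc.prems by auto
  have IH: "cavg (\<lambda>t. integral\<^sup>L M (vaoi pol X (Suc n) t)) \<longlonglongrightarrow> L + pg * (\<Sum>i = 1..n. 1 / \<rho> i)"
    using Suc by simp
  have rec: "integral\<^sup>L M (vaoi pol X (Suc (Suc n)) (Suc t)) =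
      (1 - ?r) * integral\<^sup>L M (vaoi pol X (Suc (Suc n)) t) + (?r * integral\<^sup>L M (vaoi pol X (Suc n) t) + pg)" for t
    using relay_rec[of "Suc n" pol t] pg prL Suc.prems by (simp add: algebra_simps)
  have cu: "cavg (\<lambda>t. ?r * integral\<^sup>L M (vaoi pol X (Suc n) t) + pg) \<longlonglongrightarrow> ?r * (L + pg * (\<Sum>i = 1..n. 1 / \<rho> i)) + pg"
  proof -
    have eq: "cavg (\<lambda>t. ?r * integral\<^sup>L M (vaoi pol X (Suc n) t) + pg) =
        (\<lambda>T. ?r * cavg (\<lambda>t. integral\<^sup>L M (vaoi pol X (Suc n) t)) T + cavg (\<lambda>_. pg) T)"
      by (rule ext) (simp add: cavg_add cavg_mult)
    show ?thesis unfolding eq by (rule tendsto_add[OF tendsto_mult[OF tendsto_const IH] cavg_const])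
  qed
  have "cavg (\<lambda>t. integral\<^sup>L M (vaoi pol X (Suc (Suc n)) t)) \<longlonglongrightarrow>
      (?r * (L + pg * (\<Sum>i = 1..n. 1 / \<rho> i)) + pg) / (1 - (1 - ?r))"
    by (rule lin_rec[OF _ _ E0 rec cu]) (use r in auto)
  moreover have "(?r * (L + pg * (\<Sum>i = 1..n. 1 / \<rho> i)) + pg) / (1 - (1 - ?r)) =
      L + pg * (\<Sum>i = 1..Suc n. 1 / \<rho> i)"
    using r by (simp add: field_simps)
  ultimately show ?case by simp
qed

end

theorem theorem2:
  fixes M :: "'w measure" and X :: "idx \<Rightarrow> 'w \<Rightarrow> bool"
    and pg :: real and \<rho> :: "nat \<Rightarrow> real" and N :: nat and pol :: policy
  assumes "prob_space M"
    and "prob_space.indep_vars M (\<lambda>_. count_space UNIV) X UNIV"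
    and "0 < pg" and "pg < 1"
    and "\<forall>t. measure M {\<omega> \<in> space M. X (Gen t) \<omega>} = pg"
    and "0 < \<rho> 0" and "\<rho> 0 < 1"
    and "\<forall>i\<in>{1..N}. 0 < \<rho> i \<and> \<rho> i \<le> 1"
    and "\<forall>i\<le>N. \<forall>t. measure M {\<omega> \<in> space M. X (Link i t) \<omega>} = \<rho> i"
    and "\<forall>\<alpha>. pol = RandStat \<alpha> \<longrightarrow>
           0 < \<alpha> \<and> \<alpha> \<le> 1 \<and> (\<forall>t. measure M {\<omega> \<in> space M. X (Coin t) \<omega>} = \<alpha>)"
    and "\<forall>D. pol = Uniform D \<longrightarrow> D \<ge> 1"
  shows "\<exists>L. avg_vaoi M pol X 1 \<longlonglongrightarrow> L \<and>
             avg_vaoi M pol X (N + 1) \<longlonglongrightarrow> L + pg * (\<Sum>i = 1..N. 1 / \<rho> i)"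
proof -
  have V: "vsys M X" unfolding vsys_def vsys_axioms_def using assms(1,2) by auto
  interpret V: vsys M X by (rule V)
  have pg: "\<And>t. V.pr (Gen t) = pg" using assms(5) by (simp add: V.pr_def)
  have prL: "\<forall>i\<le>N. \<forall>t. V.pr (Link i t) = \<rho> i" using assms(9) by (simp add: V.pr_def)
  have r0: "\<And>t. V.pr (Link 0 t) = \<rho> 0" using prL by simp
  have avg: "avg_vaoi M pol X j = cavg (\<lambda>t. integral\<^sup>L M (vaoi pol X j t))" for j
    by (rule ext) (simp add: avg_vaoi_def cavg_def)
  have "\<exists>L. cavg (\<lambda>t. integral\<^sup>L M (vaoi pol X 1 t)) \<longlonglongrightarrow> L"
  proof (cases pol)
    case (RandStat \<alpha>)
    then have a: "0 < \<alpha>" "\<alpha> \<le> 1" "\<And>t. V.pr (Coin t) = \<alpha>" using assms(10) by (auto simp: V.pr_def)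
    show ?thesis using V.conv_RS[OF RandStat a pg r0 assms(6,7)] by blast
  next
    case (Uniform D)
    then have "D \<ge> 1" using assms(11) by auto
    then show ?thesis using V.conv_U[OF Uniform _ pg assms(3) r0 assms(6,7)] by blast
  next
    case (Threshold T)
    show ?thesis
    proof (cases "T = 0")
      case True
      then show ?thesis using V.conv_T0[OF _ pg r0 assms(6,7)] Threshold by blast
    next
      case False
      then show ?thesis using V.conv_T[OF Threshold _ pg assms(3,4) r0 assms(6,7)] by auto
    qed
  qed
  then obtain L where L: "cavg (\<lambda>t. integral\<^sup>L M (vaoi pol X 1 t)) \<longlonglongrightarrow> L" by blast
  have "cavg (\<lambda>t. integral\<^sup>L M (vaoi pol X (Suc N) t)) \<longlonglongrightarrow> L + pg * (\<Sum>i = 1..N. 1 / \<rho> i)"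
    by (rule V.relay_conv[OF pg assms(8) prL L]) simp
  then show ?thesis using L unfolding avg by auto
qed


end
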